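(* Let $f\in\mathcal B_k^{2+\nu}$ with $I=[0,1)$. Let $k'\le n$ and $m\ge 0$, and let $a_{k'}\dots a_n$ and $a'_n a'_{n+1}\dots a'_{n+m}$ be admissible words (consecutive indices $k',\dots,n$ and $n,\dots,n+m$ respectively) with $\pi_1(a_n)=\pi_1(a'_n)$. Then the word $a_{k'}\dots a_n a'_{n+1}\dots a'_{n+m}$ is admissible.
   Context: Let $\mathcal A$ be a finite alphabet with $d\ge 2$ elements and $I$ a bounded interval. A generalized interval exchange map (g.i.e.m.) is a bijection $f:I\to I$ together with a partition $\{I_\alpha\}_{\alpha\in\mathcal A}$ of $I$ into nonempty intervals of the form $[a,b)$ such that each $f|_{I_\alpha}$ is an orientation-preserving homeomorphism onto an interval. For intervals $J,U$ write $J<U$ if their interiors are disjoint and $x<y$ for all $x\in J$, $y\in U$. The combinatorial data of $f$ are the bijections $\pi_0,\pi_1:\mathcal A\to\{1,\dots,d\}$ with $I_\alpha<I_\beta\iff\pi_0(\alpha)<\pi_0(\beta)$ and $f(I_\alpha)<f(I_\beta)\iff\pi_1(\alpha)<\pi_1(\beta)$; they are assumed irreducible: $\pi_1\circ\pi_0^{-1}(\{1,\dots,j\})\neq\{1,\dots,j\}$ for $1\le j<d$. Rauzy–Veech renormalization: let $\alpha(\varepsilon)=\pi_\varepsilon^{-1}(d)$, $\varepsilon\in\{0,1\}$. If $|I_{\alpha(0)}|>|f(I_{\alpha(1)})|$, $f$ has type 0, winner $\alpha(0)$, loser $\alpha(1)$, and $I^1=I\setminus f(I_{\alpha(1)})$,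 $I^1_\alpha=I_\alpha$ for $\alpha\ne\alpha(0)$, $I^1_{\alpha(0)}=I_{\alpha(0)}\setminus f(I_{\alpha(1)})$. If $|I_{\alpha(0)}|<|f(I_{\alpha(1)})|$, $f$ has type 1, winner $\alpha(1)$, loser $\alpha(0)$, and $I^1=I\setminus I_{\alpha(0)}$, $I^1_\alpha=I_\alpha$ for $\alpha\ne\alpha(0),\alpha(1)$, $I^1_{\alpha(1)}=f^{-1}(f(I_{\alpha(1)})\setminus I_{\alpha(0)})$, $I^1_{\alpha(0)}=I_{\alpha(1)}\setminus I^1_{\alpha(1)}$. The renormalization $R(f):I^1\to I^1$ is the first return map of $f$ to $I^1$, regarded as a g.i.e.m. with partition $\{I^1_\alpha\}$. $f$ is infinitely renormalizable if $R^n(f)$ is defined for all $n$. Write $f_n=R^n(f)$ ($f_0=f$), $I^n$ its domain ($I^0=I$), $\{I^n_\alpha\}$ its partition, $\varepsilon_n$ its type, $\alpha_n(\varepsilon_n)$ and $\alpha_n(1-\varepsilon_n)$ its winner and loser; $q^n_\alpha$ is the first return time of $I^n_\alpha$ to $I^n$, so $f_n|_{I^n_\alpha}=f^{q^n_\alpha}$. $f$ has $k$-bounded combinatorics if it is infinitely renormalizable and for each $n$ and $\beta,\gamma\in\mathcal A$ there exist $n_1,p\ge 0$ with $|n-n_1|<k$, $|n-n_1-p|<k$, $\alpha_{n_1}(\varepsilon_{n_1})=\beta$, $\alpha_{n_1+p}(1-\varepsilon_{n_1+p})=\gamma$ and $\alpha_{n_1+i}(1-\varepsilon_{n_1+i})=\alpha_{n_1+i+1}(\varepsilon_{n_1+i+1})$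 for $0\le i<p$. $f$ has no connection if $f^m(\partial I_\alpha)\ne\partial I_\beta$ for all $m\ge1$ and $\alpha,\beta$ with $\pi_0(\beta)\ne1$, where $\partial[a,b)=\{a\}$. $f$ has genus one if it has at most two discontinuities. $\mathcal B_k^{2+\nu}$ ($k\in\mathbb N$, $\nu>0$) is the set of g.i.e.m. $f$ such that (i) each $f|_{I_\alpha}$ extends to $\overline{I_\alpha}$ as an orientation-preserving $C^{2+\nu}$ diffeomorphism onto its image; (ii) $f$ has $k$-bounded combinatorics; (iii) $f$ has genus one and no connection. Symbolic coding: let $\tilde{\mathcal P}^n=\{f^i(I^n_\alpha):\alpha\in\mathcal A,\,1\le i\le q^n_\alpha\}$ and $\Lambda=[0,1]\setminus\bigcup_n\bigcup_{J\in\tilde{\mathcal P}^n}\partial J$. Letters: $\mathcal L=\mathcal A\times\{0,1\}\times\mathbb N$, with projections $\pi_1(\alpha,\chi,n)=\alpha$, $\pi_2(\alpha,\chi,n)=\chi$, $\pi_3(\alpha,\chi,n)=n$; $a_i$ always denotes a letter with $\pi_3(a_i)=i$. For $x\in\Lambda$ define $s(x)=(s_i(x))_{i\ge0}$: $s_0(x)=(\beta,0,0)$ where $x\in f(I^0_\beta)$; for $i\ge1$ let $k_{i-1}(x)=\min\{k\ge0:f^k(x)\in I^{i-1}\}$; if $f^{k_{i-1}(x)}(x)\in I^i$ then it lies in $f_i(I^i_\beta)$ for a unique $\beta$ and $s_i(x)=(\beta,0,i)$; otherwise $f_{i-1}(f^{k_{i-1}(x)}(x))\in f_i(I^i_\beta)$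 for a unique $\beta$ and $s_i(x)=(\beta,1,i)$. A word is a finite collection of letters $a_{n_1},\dots,a_{n_p}$ with distinct indices (the order in which it is written is immaterial); its cylinder is $[a_{n_1}\dots a_{n_p}]=\overline{\{x\in\Lambda:s_{n_j}(x)=a_{n_j},\,1\le j\le p\}}$, and the word is admissible if its cylinder is nonempty. *)

theory Defs
  imports "HOL-Analysis.Analysis"
begin

text \<open>A g.i.e.m. is given by a map f :: real => real (only its values on the
domain matter) together with a partition P :: 'a => real set of the domain,
indexed by the finite alphabet 'a.\<close>

definition gdom :: "('a \<Rightarrow> real set) \<Rightarrow> real set" where
  "gdom P = (\<Union>\<alpha>. P \<alpha>)"

definition ilt :: "real set \<Rightarrow> real set \<Rightarrow> bool" where
  "ilt J U \<longleftrightarrow> interior J \<inter> interior U = {} \<and> (\<forall>x\<in>J. \<forall>y\<in>U. x < y)"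

definition pi0 :: "('a::finite \<Rightarrow> real set) \<Rightarrow> 'a \<Rightarrow> nat" where
  "pi0 P \<alpha> = card {\<beta>. ilt (P \<beta>) (P \<alpha>)} + 1"

definition pi1 :: "(real \<Rightarrow> real) \<Rightarrow> ('a::finite \<Rightarrow> real set) \<Rightarrow> 'a \<Rightarrow> nat" where
  "pi1 f P \<alpha> = card {\<beta>. ilt (f ` P \<beta>) (f ` P \<alpha>)} + 1"

definition irreducible :: "(real \<Rightarrow> real) \<Rightarrow> ('a::finite \<Rightarrow> real set) \<Rightarrow> bool" where
  "irreducible f P \<longleftrightarrow>
     (\<forall>j. 1 \<le> j \<and> j < CARD('a) \<longrightarrow> pi1 f P ` {\<alpha>. pi0 P \<alpha> \<in> {1..j}} \<noteq> {1..j})"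

definition giem :: "(real \<Rightarrow> real) \<Rightarrow> ('a::finite \<Rightarrow> real set) \<Rightarrow> bool" where
  "giem f P \<longleftrightarrow>
     CARD('a) \<ge> 2 \<and>
     (\<exists>a b. a < b \<and> gdom P = {a..<b}) \<and>
     (\<forall>\<alpha>. \<exists>c d. c < d \<and> P \<alpha> = {c..<d}) \<and>
     (\<forall>\<alpha> \<beta>. \<alpha> \<noteq> \<beta> \<longrightarrow> P \<alpha> \<inter> P \<beta> = {}) \<and>
     bij_betw f (gdom P) (gdom P) \<and>
     (\<forall>\<alpha>. continuous_on (P \<alpha>) f \<and> strict_mono_on (P \<alpha>) f \<and> is_interval (f ` P \<alpha>)) \<and>
     bij_betw (pi0 P) UNIV {1..CARD('a)} \<and>
     bij_betw (pi1 f P) UNIV {1..CARD('a)} \<and>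
     irreducible f P"

definition ilen :: "real set \<Rightarrow> real" where
  "ilen S = Sup S - Inf S"

definition alpha0 :: "('a::finite \<Rightarrow> real set) \<Rightarrow> 'a" where
  "alpha0 P = (THE \<alpha>. pi0 P \<alpha> = CARD('a))"

definition alpha1 :: "(real \<Rightarrow> real) \<Rightarrow> ('a::finite \<Rightarrow> real set) \<Rightarrow> 'a" where
  "alpha1 f P = (THE \<alpha>. pi1 f P \<alpha> = CARD('a))"

definition type0 :: "(real \<Rightarrow> real) \<Rightarrow> ('a::finite \<Rightarrow> real set) \<Rightarrow> bool" where
  "type0 f P \<longleftrightarrow> ilen (P (alpha0 P)) > ilen (f ` P (alpha1 f P))"

definition R_defined :: "(real \<Rightarrow> real) \<Rightarrow> ('a::finite \<Rightarrow> real set) \<Rightarrow> bool" where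
  "R_defined f P \<longleftrightarrow> ilen (P (alpha0 P)) \<noteq> ilen (f ` P (alpha1 f P))"

definition winner :: "(real \<Rightarrow> real) \<Rightarrow> ('a::finite \<Rightarrow> real set) \<Rightarrow> 'a" where
  "winner f P = (if type0 f P then alpha0 P else alpha1 f P)"

definition loser :: "(real \<Rightarrow> real) \<Rightarrow> ('a::finite \<Rightarrow> real set) \<Rightarrow> 'a" where
  "loser f P = (if type0 f P then alpha1 f P else alpha0 P)"

definition ret :: "real set \<Rightarrow> (real \<Rightarrow> real) \<Rightarrow> real \<Rightarrow> nat" where
  "ret S g x = (LEAST k. 0 < k \<and> (g ^^ k) x \<in> S)"

definition first_return :: "real set \<Rightarrow> (real \<Rightarrow> real) \<Rightarrow> real \<Rightarrow> real" where
  "first_return S g x = (g ^^ ret S g x) x"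

definition Rpart :: "(real \<Rightarrow> real) \<Rightarrow> ('a::finite \<Rightarrow> real set) \<Rightarrow> 'a \<Rightarrow> real set" where
  "Rpart f P =
     (if type0 f P
      then P (alpha0 P := P (alpha0 P) - f ` P (alpha1 f P))
      else P (alpha1 f P := {x \<in> P (alpha1 f P). f x \<notin> P (alpha0 P)},
              alpha0 P := {x \<in> P (alpha1 f P). f x \<in> P (alpha0 P)}))"

definition Rstep :: "(real \<Rightarrow> real) \<times> ('a::finite \<Rightarrow> real set) \<Rightarrow> (real \<Rightarrow> real) \<times> ('a \<Rightarrow> real set)" where
  "Rstep fp = (let f = fst fp; P = snd fp; P1 = Rpart f P in (first_return (gdom P1) f, P1))"

definition fn :: "(real \<Rightarrow> real) \<Rightarrow> ('a::finite \<Rightarrow> real set) \<Rightarrow> nat \<Rightarrow> real \<Rightarrow> real" where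
  "fn f P n = fst ((Rstep ^^ n) (f, P))"

definition Pn :: "(real \<Rightarrow> real) \<Rightarrow> ('a::finite \<Rightarrow> real set) \<Rightarrow> nat \<Rightarrow> 'a \<Rightarrow> real set" where
  "Pn f P n = snd ((Rstep ^^ n) (f, P))"

definition In :: "(real \<Rightarrow> real) \<Rightarrow> ('a::finite \<Rightarrow> real set) \<Rightarrow> nat \<Rightarrow> real set" where
  "In f P n = gdom (Pn f P n)"

definition inf_renorm :: "(real \<Rightarrow> real) \<Rightarrow> ('a::finite \<Rightarrow> real set) \<Rightarrow> bool" where
  "inf_renorm f P \<longleftrightarrow> (\<forall>n. giem (fn f P n) (Pn f P n) \<and> R_defined (fn f P n) (Pn f P n))"

definition win_n :: "(real \<Rightarrow> real) \<Rightarrow> ('a::finite \<Rightarrow> real set) \<Rightarrow> nat \<Rightarrow> 'a" where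
  "win_n f P n = winner (fn f P n) (Pn f P n)"

definition los_n :: "(real \<Rightarrow> real) \<Rightarrow> ('a::finite \<Rightarrow> real set) \<Rightarrow> nat \<Rightarrow> 'a" where
  "los_n f P n = loser (fn f P n) (Pn f P n)"

definition bounded_comb :: "nat \<Rightarrow> (real \<Rightarrow> real) \<Rightarrow> ('a::finite \<Rightarrow> real set) \<Rightarrow> bool" where
  "bounded_comb k f P \<longleftrightarrow> inf_renorm f P \<and>
     (\<forall>n \<beta> \<gamma>. \<exists>n1 p. \<bar>int n - int n1\<bar> < int k \<and> \<bar>int n - int n1 - int p\<bar> < int k \<and>
        win_n f P n1 = \<beta> \<and> los_n f P (n1 + p) = \<gamma> \<and>
        (\<forall>i<p. los_n f P (n1 + i) = win_n f P (n1 + i + 1)))"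

text \<open>Left endpoint: the boundary of [a,b) is {a}.\<close>
definition no_connection :: "(real \<Rightarrow> real) \<Rightarrow> ('a::finite \<Rightarrow> real set) \<Rightarrow> bool" where
  "no_connection f P \<longleftrightarrow>
     (\<forall>m \<alpha> \<beta>. m \<ge> 1 \<and> pi0 P \<beta> \<noteq> 1 \<longrightarrow> (f ^^ m) (Inf (P \<alpha>)) \<noteq> Inf (P \<beta>))"

definition genus_one :: "(real \<Rightarrow> real) \<Rightarrow> ('a::finite \<Rightarrow> real set) \<Rightarrow> bool" where
  "genus_one f P \<longleftrightarrow>
     (let D = {x \<in> gdom P. \<not> continuous (at x within gdom P) f} in finite D \<and> card D \<le> 2)"

definition C2nu_diffeo :: "real \<Rightarrow> (real \<Rightarrow> real) \<Rightarrow> real set \<Rightarrow> bool" where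
  "C2nu_diffeo \<nu> g S \<longleftrightarrow>
     (\<exists>g1 g2 C. (\<forall>x\<in>S. (g has_real_derivative g1 x) (at x within S) \<and>
                          (g1 has_real_derivative g2 x) (at x within S) \<and> g1 x > 0) \<and>
               (\<forall>x\<in>S. \<forall>y\<in>S. \<bar>g2 x - g2 y\<bar> \<le> C * \<bar>x - y\<bar> powr \<nu>))"

definition in_B :: "nat \<Rightarrow> real \<Rightarrow> (real \<Rightarrow> real) \<Rightarrow> ('a::finite \<Rightarrow> real set) \<Rightarrow> bool" where
  "in_B k \<nu> f P \<longleftrightarrow> giem f P \<and>
     (\<forall>\<alpha>. \<exists>g. (\<forall>x\<in>P \<alpha>. g x = f x) \<and> C2nu_diffeo \<nu> g (closure (P \<alpha>))) \<and>
     bounded_comb k f P \<and> genus_one f P \<and> no_connection f P"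

definition qn :: "(real \<Rightarrow> real) \<Rightarrow> ('a::finite \<Rightarrow> real set) \<Rightarrow> nat \<Rightarrow> 'a \<Rightarrow> nat" where
  "qn f P n \<alpha> = ret (In f P n) f (Inf (Pn f P n \<alpha>))"

definition tildeP :: "(real \<Rightarrow> real) \<Rightarrow> ('a::finite \<Rightarrow> real set) \<Rightarrow> nat \<Rightarrow> real set set" where
  "tildeP f P n = {(f ^^ i) ` Pn f P n \<alpha> | \<alpha> i. 1 \<le> i \<and> i \<le> qn f P n \<alpha>}"

definition Lambda :: "(real \<Rightarrow> real) \<Rightarrow> ('a::finite \<Rightarrow> real set) \<Rightarrow> real set" where
  "Lambda f P = {0..<1} - (\<Union>n. \<Union>J\<in>tildeP f P n. {Inf J})"

text \<open>Letters (alpha, chi, n), chi in {0,1}.\<close>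
type_synonym 'a letter = "'a \<times> nat \<times> nat"

definition lidx :: "'a letter \<Rightarrow> nat" where
  "lidx l = snd (snd l)"

definition lsym :: "'a letter \<Rightarrow> 'a" where
  "lsym l = fst l"

fun scode :: "(real \<Rightarrow> real) \<Rightarrow> ('a::finite \<Rightarrow> real set) \<Rightarrow> nat \<Rightarrow> real \<Rightarrow> 'a letter" where
  "scode f P 0 x = (THE \<beta>. x \<in> f ` P \<beta>, 0, 0)"
| "scode f P (Suc j) x =
     (let k = (LEAST k. (f ^^ k) x \<in> In f P j); y = (f ^^ k) x in
      if y \<in> In f P (Suc j)
      then (THE \<beta>. y \<in> fn f P (Suc j) ` Pn f P (Suc j) \<beta>, 0, Suc j)
      else (THE \<beta>. fn f P j y \<in> fn f P (Suc j) ` Pn f P (Suc j) \<beta>, 1, Suc j))"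

definition is_word :: "'a letter set \<Rightarrow> bool" where
  "is_word W \<longleftrightarrow> finite W \<and> inj_on lidx W"

definition cylinder :: "(real \<Rightarrow> real) \<Rightarrow> ('a::finite \<Rightarrow> real set) \<Rightarrow> 'a letter set \<Rightarrow> real set" where
  "cylinder f P W = closure {x \<in> Lambda f P. \<forall>l\<in>W. scode f P (lidx l) x = l}"

definition admissible :: "(real \<Rightarrow> real) \<Rightarrow> ('a::finite \<Rightarrow> real set) \<Rightarrow> 'a letter set \<Rightarrow> bool" where
  "admissible f P W \<longleftrightarrow> is_word W \<and> cylinder f P W \<noteq> {}"

end

theory Submission
  imports Defs
begin


lemma giem_bij: "giem g P \<Longrightarrow> bij_betw g (gdom P) (gdom P)"
  by (simp add: giem_def)

lemma piece_sub: "P \<alpha> \<subseteq> gdom P"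
  by (auto simp: gdom_def)

lemma giem_disj: "giem g P \<Longrightarrow> \<alpha> \<noteq> \<beta> \<Longrightarrow> P \<alpha> \<inter> P \<beta> = {}"
  by (simp add: giem_def)

lemma giem_piece: "giem g P \<Longrightarrow> \<exists>c d. c < d \<and> P \<alpha> = {c..<d}"
  by (simp add: giem_def)

lemma giem_dom: "giem g P \<Longrightarrow> \<exists>a b. a < b \<and> gdom P = {a..<b}"
  by (simp add: giem_def)

lemma giem_mono: "giem g P \<Longrightarrow> strict_mono_on (P \<alpha>) g"
  by (simp add: giem_def)

lemma giem_intv: "giem g P \<Longrightarrow> is_interval (g ` P \<alpha>)"
  by (simp add: giem_def)

lemma piece_ne: "giem g P \<Longrightarrow> P \<alpha> \<noteq> {}"
  using giem_piece[of g P \<alpha>] by auto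

lemma g_img: "giem g P \<Longrightarrow> g ` gdom P = gdom P"
  using giem_bij[of g P] by (simp add: bij_betw_def)

lemma cell_sub: "giem g P \<Longrightarrow> g ` P \<alpha> \<subseteq> gdom P"
proof -
  assume G: "giem g P"
  have "g ` P \<alpha> \<subseteq> g ` gdom P" using piece_sub[of P \<alpha>] by (rule image_mono)
  then show ?thesis using g_img[OF G] by simp
qed

lemma g_in: "giem g P \<Longrightarrow> x \<in> gdom P \<Longrightarrow> g x \<in> gdom P"
  using g_img[of g P] by (metis imageI)

lemma g_inj: "giem g P \<Longrightarrow> x \<in> gdom P \<Longrightarrow> y \<in> gdom P \<Longrightarrow> g x = g y \<Longrightarrow> x = y"
proof -
  assume G: "giem g P" and xy: "x \<in> gdom P" "y \<in> gdom P" "g x = g y"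
  have "inj_on g (gdom P)" using giem_bij[OF G] by (simp add: bij_betw_def)
  then show "x = y" using xy by (simp add: inj_on_def)
qed

lemma cells_disj: "giem g P \<Longrightarrow> \<alpha> \<noteq> \<beta> \<Longrightarrow> g ` P \<alpha> \<inter> g ` P \<beta> = {}"
proof -
  assume G: "giem g P" and ne: "\<alpha> \<noteq> \<beta>"
  show ?thesis
  proof (rule ccontr)
    assume "g ` P \<alpha> \<inter> g ` P \<beta> \<noteq> {}"
    then obtain x y where x: "x \<in> P \<alpha>" and y: "y \<in> P \<beta>" and e: "g x = g y" by auto
    have xi: "x \<in> gdom P" and yi: "y \<in> gdom P" using x y piece_sub[of P] by auto
    have "x = y" by (rule g_inj[OF G xi yi e])
    then show False using x y giem_disj[OF G ne] by auto
  qed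
qed

lemma cells_cover: "giem g P \<Longrightarrow> x \<in> gdom P \<Longrightarrow> \<exists>\<alpha>. x \<in> g ` P \<alpha>"
proof -
  assume G: "giem g P" and x: "x \<in> gdom P"
  then have "x \<in> g ` gdom P" using g_img[OF G] by simp
  then obtain y where "y \<in> gdom P" "x = g y" by auto
  then show ?thesis by (auto simp: gdom_def)
qed

lemma the_cell: "giem g P \<Longrightarrow> x \<in> g ` P \<alpha> \<Longrightarrow> (THE \<beta>. x \<in> g ` P \<beta>) = \<alpha>"
proof -
  assume G: "giem g P" and x: "x \<in> g ` P \<alpha>"
  show ?thesis
  proof (rule the_equality)
    show "x \<in> g ` P \<alpha>" by (rule x)
    fix \<beta> assume "x \<in> g ` P \<beta>"
    then show "\<beta> = \<alpha>" using x cells_disj[OF G, of \<beta> \<alpha>] by blast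
  qed
qed

lemma cell_uncountable: "giem g P \<Longrightarrow> uncountable (g ` P \<alpha>)"
proof -
  assume G: "giem g P"
  obtain c d where cd: "c < d" "P \<alpha> = {c..<d}" using giem_piece[OF G] by blast
  define m where "m = (c+d)/2"
  have m: "c \<in> P \<alpha>" "m \<in> P \<alpha>" "c < m" using cd unfolding m_def by auto
  have lt: "g c < g m" using giem_mono[OF G, of \<alpha>] m unfolding strict_mono_on_def by blast
  have iv: "is_interval (g ` P \<alpha>)" by (rule giem_intv[OF G])
  have gc: "g c \<in> g ` P \<alpha>" and gm: "g m \<in> g ` P \<alpha>" using m by auto
  have "{g c..g m} \<subseteq> g ` P \<alpha>"
  proof
    fix x assume "x \<in> {g c..g m}"
    then show "x \<in> g ` P \<alpha>" using iv gc gm unfolding is_interval_1 by auto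
  qed
  moreover have "uncountable {g c..g m}" using lt uncountable_closed_interval by blast
  ultimately show ?thesis using countable_subset by blast
qed

lemma card_UNIV_pos: "CARD('a::finite) \<ge> 1"
  by (simp add: Suc_leI finite_UNIV_card_ge_0)

lemma bij_top: 
  assumes "bij_betw (h::'a::finite \<Rightarrow> nat) UNIV {1..CARD('a)}"
  shows "h (THE \<alpha>. h \<alpha> = CARD('a)) = CARD('a)"
proof -
  have "CARD('a) \<in> h ` UNIV" using assms card_UNIV_pos[where 'a='a]
    by (simp add: bij_betw_def)
  then obtain \<alpha> where a: "h \<alpha> = CARD('a)" by auto
  have "\<exists>!\<alpha>. h \<alpha> = CARD('a)"
    using a assms by (metis bij_betw_def inj_onD UNIV_I)
  then show ?thesis by (rule theI')
qed

lemma all_ilt: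
  fixes Q :: "'a::finite \<Rightarrow> real set"
  assumes ne: "\<And>\<beta>. Q \<beta> \<noteq> {}"
    and c: "card {\<beta>. ilt (Q \<beta>) (Q \<alpha>)} + 1 = CARD('a)"
    and b: "\<beta> \<noteq> \<alpha>"
  shows "ilt (Q \<beta>) (Q \<alpha>)"
proof -
  let ?S = "{\<beta>. ilt (Q \<beta>) (Q \<alpha>)}"
  have "\<alpha> \<notin> ?S"
  proof
    assume "\<alpha> \<in> ?S"
    then have "ilt (Q \<alpha>) (Q \<alpha>)" by simp
    moreover obtain x where "x \<in> Q \<alpha>" using ne by blast
    ultimately show False unfolding ilt_def by auto
  qed
  then have sub: "?S \<subseteq> UNIV - {\<alpha>}" by blast
  have "card (UNIV - {\<alpha>}) = CARD('a) - 1" by (simp add: card_Diff_singleton)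
  then have "card ?S = card (UNIV - {\<alpha>})" using c by simp
  then have "?S = UNIV - {\<alpha>}" using card_subset_eq[OF _ sub] by simp
  then show ?thesis using b by blast
qed

lemma alpha0_top: "giem g (P::'a::finite \<Rightarrow> real set) \<Longrightarrow> pi0 P (alpha0 P) = CARD('a)"
proof -
  assume G: "giem g P"
  have "bij_betw (pi0 P) UNIV {1..CARD('a)}" using G by (simp add: giem_def)
  from bij_top[OF this] show ?thesis unfolding alpha0_def .
qed

lemma alpha1_top: "giem g (P::'a::finite \<Rightarrow> real set) \<Longrightarrow> pi1 g P (alpha1 g P) = CARD('a)"
proof -
  assume G: "giem g P"
  have "bij_betw (pi1 g P) UNIV {1..CARD('a)}" using G by (simp add: giem_def)
  from bij_top[OF this] show ?thesis unfolding alpha1_def .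
qed

lemma alpha0_right: "giem g (P::'a::finite \<Rightarrow> real set) \<Longrightarrow> \<beta> \<noteq> alpha0 P \<Longrightarrow> ilt (P \<beta>) (P (alpha0 P))"
proof -
  assume G: "giem g P" and b: "\<beta> \<noteq> alpha0 P"
  have ne: "\<And>\<gamma>. P \<gamma> \<noteq> {}" using piece_ne[OF G] .
  have c: "card {\<gamma>. ilt (P \<gamma>) (P (alpha0 P))} + 1 = CARD('a)"
    using alpha0_top[OF G] unfolding pi0_def .
  show ?thesis by (rule all_ilt[OF ne c b])
qed

lemma alpha1_right: "giem g (P::'a::finite \<Rightarrow> real set) \<Longrightarrow> \<beta> \<noteq> alpha1 g P \<Longrightarrow> ilt (g ` P \<beta>) (g ` P (alpha1 g P))"
proof -
  assume G: "giem g P" and b: "\<beta> \<noteq> alpha1 g P"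
  have ne: "\<And>\<gamma>. g ` P \<gamma> \<noteq> {}" using piece_ne[OF G] by simp
  have c: "card {\<gamma>. ilt (g ` P \<gamma>) (g ` P (alpha1 g P))} + 1 = CARD('a)"
    using alpha1_top[OF G] unfolding pi1_def .
  show ?thesis by (rule all_ilt[where Q="\<lambda>\<gamma>. g ` P \<gamma>", OF ne c b])
qed

lemma alpha_ne: "giem g (P::'a::finite \<Rightarrow> real set) \<Longrightarrow> alpha0 P \<noteq> alpha1 g P"
proof
  assume G: "giem g P" and e: "alpha0 P = alpha1 g P"
  define a where "a = alpha0 P"
  define d where "d = CARD('a)"
  have d2: "d \<ge> 2" using G by (simp add: giem_def d_def)
  have b0: "bij_betw (pi0 P) UNIV {1..d}" and b1: "bij_betw (pi1 g P) UNIV {1..d}"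
    using G by (auto simp: giem_def d_def)
  have t0: "pi0 P a = d" and t1: "pi1 g P a = d"
    using alpha0_top[OF G] alpha1_top[OF G] e by (auto simp: a_def d_def)
  have r0: "\<And>\<alpha>. pi0 P \<alpha> \<in> {1..d}" using b0 by (auto simp: bij_betw_def)
  have i0: "inj (pi0 P)" using b0 by (simp add: bij_betw_def)
  have S: "{\<alpha>. pi0 P \<alpha> \<in> {1..d-1}} = UNIV - {a}"
  proof (intro set_eqI iffI)
    fix \<alpha> assume "\<alpha> \<in> {\<alpha>. pi0 P \<alpha> \<in> {1..d-1}}"
    then have "pi0 P \<alpha> \<noteq> d" using d2 by auto
    then show "\<alpha> \<in> UNIV - {a}" using t0 by auto
  next
    fix \<alpha> assume "\<alpha> \<in> UNIV - {a}"
    then have "pi0 P \<alpha> \<noteq> pi0 P a" using i0 by (auto simp: inj_on_def)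
    then show "\<alpha> \<in> {\<alpha>. pi0 P \<alpha> \<in> {1..d-1}}" using r0[of \<alpha>] t0 by auto
  qed
  have i1: "inj (pi1 g P)" and s1: "pi1 g P ` UNIV = {1..d}" using b1 by (auto simp: bij_betw_def)
  have "pi1 g P ` (UNIV - {a}) = pi1 g P ` UNIV - pi1 g P ` {a}"
    using i1 by (simp add: image_set_diff)
  also have "\<dots> = {1..d} - {d}" using s1 t1 by simp
  also have "\<dots> = {1..d-1}" using d2 by auto
  finally have X: "pi1 g P ` {\<alpha>. pi0 P \<alpha> \<in> {1..d-1}} = {1..d-1}" using S by simp
  have "irreducible g P" using G by (simp add: giem_def)
  then have "pi1 g P ` {\<alpha>. pi0 P \<alpha> \<in> {1..d-1}} \<noteq> {1..d-1}"
    unfolding irreducible_def d_def using d2 unfolding d_def by auto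
  then show False using X by simp
qed



lemma stage_geom:
  fixes g :: "real \<Rightarrow> real" and P :: "'a::finite \<Rightarrow> real set"
  assumes G: "giem g P" and RD: "R_defined g P"
  shows "type0 g P \<Longrightarrow> g ` P (alpha1 g P) \<subseteq> P (alpha0 P)"
    and "\<not> type0 g P \<Longrightarrow> P (alpha0 P) \<subseteq> g ` P (alpha1 g P)"
proof -
  define A where "A = P (alpha0 P)"
  define B where "B = g ` P (alpha1 g P)"
  define I where "I = gdom P"
  obtain a b where ab: "a < b" "I = {a..<b}" using giem_dom[OF G] unfolding I_def by blast
  obtain c d where cd: "c < d" "A = {c..<d}" using giem_piece[OF G] unfolding A_def by blast
  have AI: "A \<subseteq> I" unfolding A_def I_def by (rule piece_sub)
  have BI: "B \<subseteq> I" unfolding B_def I_def by (rule cell_sub[OF G])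
  have cA: "c \<in> A" using cd by simp
  have oth: "x < c" if "x \<in> P \<beta>" "\<beta> \<noteq> alpha0 P" for x \<beta>
    using alpha0_right[OF G that(2)] that(1) cA unfolding ilt_def A_def by blast
  have Iltd: "x < d" if "x \<in> I" for x
  proof -
    from that obtain \<beta> where "x \<in> P \<beta>" unfolding I_def gdom_def by blast
    then show ?thesis using oth[of x \<beta>] cd by (cases "\<beta> = alpha0 P") (auto simp: A_def)
  qed
  have up: "y' \<in> B" if U: "y \<in> B" "y \<le> y'" "y' \<in> I" for y y'
  proof (rule ccontr)
    assume nb: "y' \<notin> B"
    obtain \<beta> where "y' \<in> g ` P \<beta>" using cells_cover[OF G] U(3) unfolding I_def by blast
    moreover have "\<beta> \<noteq> alpha1 g P" using nb calculation unfolding B_def by blast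
    ultimately have "y' < y" using alpha1_right[OF G] U(1) unfolding ilt_def B_def by blast
    then show False using U(2) by simp
  qed
  obtain y0 where y0: "y0 \<in> B" using piece_ne[OF G] unfolding B_def by blast
  have bddA: "bdd_above B" using Iltd BI by (meson bdd_above.I subsetD less_imp_le)
  have bddB: "bdd_below B" using BI ab by (metis atLeastLessThan_iff bdd_below.I subsetD)
  have supB: "Sup B = d"
  proof (rule antisym)
    show "Sup B \<le> d" using y0 BI Iltd by (intro cSup_least) (auto intro: less_imp_le)
    have "max y0 c < d" using cd Iltd y0 BI by auto
    then show "d \<le> Sup B"
    proof (rule dense_le_bounded)
      fix w assume w: "max y0 c < w" "w < d"
      then have "w \<in> A" using cd by auto
      then have "w \<in> B" using up[OF y0] w AI by auto
      then show "w \<le> Sup B" using bddA by (rule cSup_upper)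
    qed
  qed
  have ilA: "ilen A = d - c" using cd by (simp add: ilen_def)
  have ilB: "ilen B = d - Inf B" using supB by (simp add: ilen_def)
  show "type0 g P \<Longrightarrow> g ` P (alpha1 g P) \<subseteq> P (alpha0 P)"
  proof -
    assume "type0 g P"
    then have "ilen A > ilen B" unfolding type0_def A_def B_def .
    then have ic: "Inf B > c" using ilA ilB by simp
    have "B \<subseteq> A"
    proof
      fix y assume y: "y \<in> B"
      have "Inf B \<le> y" by (rule cInf_lower[OF y bddB])
      then show "y \<in> A" using ic Iltd y BI cd by auto
    qed
    then show ?thesis unfolding A_def B_def .
  qed
  show "\<not> type0 g P \<Longrightarrow> P (alpha0 P) \<subseteq> g ` P (alpha1 g P)"
  proof -
    assume "\<not> type0 g P"
    then have "ilen A < ilen B" using RD unfolding type0_def R_defined_def A_def B_def by auto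
    then have ic: "Inf B < c" using ilA ilB by simp
    have "A \<subseteq> B"
    proof
      fix x assume x: "x \<in> A"
      then have "Inf B < x" using ic cd by auto
      then obtain y where "y \<in> B" "y < x" using cInf_less_iff[of B x] y0 bddB by auto
      then show "x \<in> B" using up x AI by auto
    qed
    then show ?thesis unfolding A_def B_def .
  qed
qed



definition Rrem :: "(real \<Rightarrow> real) \<Rightarrow> ('a::finite \<Rightarrow> real set) \<Rightarrow> real set" where
  "Rrem g P = (if type0 g P then g ` P (alpha1 g P) else P (alpha0 P))"

definition lose :: "(real \<Rightarrow> real) \<Rightarrow> ('a::finite \<Rightarrow> real set) \<Rightarrow> 'a" where
  "lose g P = (if type0 g P then alpha1 g P else alpha0 P)"

lemma piece_mem: "x \<in> P \<alpha> \<Longrightarrow> x \<in> gdom P"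
  by (auto simp: gdom_def)

context
  fixes g :: "real \<Rightarrow> real" and P :: "'a::finite \<Rightarrow> real set"
  assumes G: "giem g P" and RD: "R_defined g P"
begin

lemma Rrem_T: "type0 g P \<Longrightarrow> Rrem g P = g ` P (alpha1 g P)"
  unfolding Rrem_def by (rule if_P)

lemma Rrem_F: "\<not> type0 g P \<Longrightarrow> Rrem g P = P (alpha0 P)"
  unfolding Rrem_def by (rule if_not_P)

lemma R_sub0: "Rrem g P \<subseteq> P (alpha0 P)"
proof (cases "type0 g P")
  case True then show ?thesis using stage_geom(1)[OF G RD True] Rrem_T by metis
next
  case False then show ?thesis using Rrem_F by blast
qed

lemma R_sub1: "Rrem g P \<subseteq> g ` P (alpha1 g P)"
proof (cases "type0 g P")
  case True then show ?thesis using Rrem_T by blast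
next
  case False then show ?thesis using stage_geom(2)[OF G RD False] Rrem_F by metis
qed

lemma R_dom: "Rrem g P \<subseteq> gdom P"
  by (rule subset_trans[OF R_sub0 piece_sub[of P "alpha0 P"]])

lemma Rpart_dom: "gdom (Rpart g P) = gdom P - Rrem g P"
proof (cases "type0 g P")
  case True
  let ?a0 = "alpha0 P" and ?B = "g ` P (alpha1 g P)"
  have eq: "Rpart g P = P (?a0 := P ?a0 - ?B)" using True by (simp add: Rpart_def)
  have R: "Rrem g P = ?B" using True by (simp add: Rrem_def)
  have BA: "?B \<subseteq> P ?a0" using stage_geom(1)[OF G RD True] .
  show ?thesis
  proof (intro set_eqI iffI)
    fix x assume "x \<in> gdom (Rpart g P)"
    then obtain \<beta> where x: "x \<in> (P (?a0 := P ?a0 - ?B)) \<beta>" unfolding eq gdom_def by blast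
    show "x \<in> gdom P - Rrem g P"
    proof (cases "\<beta> = ?a0")
      case True then show ?thesis using x R by (auto simp: gdom_def)
    next
      case False
      then have "x \<in> P \<beta>" using x by simp
      moreover have "P \<beta> \<inter> P ?a0 = {}" using giem_disj[OF G False] .
      ultimately show ?thesis using BA R by (auto simp: gdom_def)
    qed
  next
    fix x assume x: "x \<in> gdom P - Rrem g P"
    then obtain \<beta> where xb: "x \<in> P \<beta>" unfolding gdom_def by blast
    then have "x \<in> (P (?a0 := P ?a0 - ?B)) \<beta>" using x R by auto
    then show "x \<in> gdom (Rpart g P)" unfolding eq gdom_def by blast
  qed
next
  case False
  let ?a0 = "alpha0 P" and ?a1 = "alpha1 g P"
  define X where "X = {x \<in> P ?a1. g x \<notin> P ?a0}"
  define Y where "Y = {x \<in> P ?a1. g x \<in> P ?a0}"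
  have ne: "?a0 \<noteq> ?a1" using alpha_ne[OF G] .
  have eq: "Rpart g P = P (?a1 := X, ?a0 := Y)" using False by (simp add: Rpart_def X_def Y_def)
  have R: "Rrem g P = P ?a0" using False by (simp add: Rrem_def)
  show ?thesis
  proof (intro set_eqI iffI)
    fix x assume "x \<in> gdom (Rpart g P)"
    then obtain \<beta> where x: "x \<in> (P (?a1 := X, ?a0 := Y)) \<beta>" unfolding eq gdom_def by blast
    have d1: "P ?a1 \<inter> P ?a0 = {}" using giem_disj[OF G] ne by blast
    show "x \<in> gdom P - Rrem g P"
    proof (cases "\<beta> = ?a0")
      case True then have "x \<in> P ?a1" using x by (simp add: Y_def)
      then show ?thesis using d1 R by (auto simp: gdom_def)
    next
      case F: False
      show ?thesis
      proof (cases "\<beta> = ?a1")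
        case True then have "x \<in> P ?a1" using x F by (simp add: X_def)
        then show ?thesis using d1 R by (auto simp: gdom_def)
      next
        case False
        then have "x \<in> P \<beta>" using x F by simp
        moreover have "P \<beta> \<inter> P ?a0 = {}" using giem_disj[OF G F] .
        ultimately show ?thesis using R by (auto simp: gdom_def)
      qed
    qed
  next
    fix x assume x: "x \<in> gdom P - Rrem g P"
    then obtain \<beta> where xb: "x \<in> P \<beta>" unfolding gdom_def by blast
    have b0: "\<beta> \<noteq> ?a0" using x xb R by auto
    show "x \<in> gdom (Rpart g P)"
    proof (cases "\<beta> = ?a1")
      case True
      show ?thesis
      proof (cases "g x \<in> P ?a0")
        case True
        then have "x \<in> (P (?a1 := X, ?a0 := Y)) ?a0" using xb \<open>\<beta> = ?a1\<close> by (simp add: Y_def)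
        then show ?thesis unfolding eq gdom_def by blast
      next
        case False
        then have "x \<in> (P (?a1 := X, ?a0 := Y)) ?a1" using xb \<open>\<beta> = ?a1\<close> ne by (simp add: X_def)
        then show ?thesis unfolding eq gdom_def by blast
      qed
    next
      case False
      then have "x \<in> (P (?a1 := X, ?a0 := Y)) \<beta>" using xb b0 by simp
      then show ?thesis unfolding eq gdom_def by blast
    qed
  qed
qed

lemma R_step: "y \<in> Rrem g P \<Longrightarrow> g y \<in> gdom P - Rrem g P"
proof -
  assume y: "y \<in> Rrem g P"
  have y0: "y \<in> P (alpha0 P)" using y R_sub0 by blast
  have "g y \<in> g ` P (alpha0 P)" using y0 by simp
  then have "g y \<notin> g ` P (alpha1 g P)" using cells_disj[OF G alpha_ne[OF G]] by blast
  then have "g y \<notin> Rrem g P" using R_sub1 by blast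
  moreover have "g y \<in> gdom P" using g_in[OF G] y R_dom by blast
  ultimately show ?thesis by simp
qed

lemma piece_D:
  assumes p: "p \<in> Rpart g P \<beta>"
  shows "\<beta> \<noteq> lose g P \<Longrightarrow> p \<in> P \<beta> \<and> g p \<notin> Rrem g P"
    and "\<beta> = lose g P \<Longrightarrow> g p \<in> Rrem g P \<and> p \<in> gdom P"
proof -
  have ne: "alpha0 P \<noteq> alpha1 g P" using alpha_ne[OF G] .
  have c1: "\<And>\<gamma> x. \<gamma> \<noteq> alpha1 g P \<Longrightarrow> x \<in> P \<gamma> \<Longrightarrow> g x \<notin> g ` P (alpha1 g P)"
    using cells_disj[OF G] by blast
  {
    assume b: "\<beta> \<noteq> lose g P"
    show "p \<in> P \<beta> \<and> g p \<notin> Rrem g P"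
    proof (cases "type0 g P")
      case True
      then have "p \<in> P \<beta>" using p by (auto simp: Rpart_def split: if_splits)
      moreover have "\<beta> \<noteq> alpha1 g P" using b True by (simp add: lose_def)
      ultimately show ?thesis using c1 True by (auto simp: Rrem_def)
    next
      case False
      have b0: "\<beta> \<noteq> alpha0 P" using b False by (simp add: lose_def)
      show ?thesis
      proof (cases "\<beta> = alpha1 g P")
        case True
        then show ?thesis using p False b0 by (auto simp: Rpart_def Rrem_def)
      next
        case b1: False
        then have "p \<in> P \<beta>" using p b0 False by (auto simp: Rpart_def)
        moreover have "g p \<notin> P (alpha0 P)"
          using c1[OF b1 calculation] stage_geom(2)[OF G RD False] by blast
        ultimately show ?thesis using False by (simp add: Rrem_def)
      qed
    qed
  }
  {
    assume b: "\<beta> = lose g P"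
    show "g p \<in> Rrem g P \<and> p \<in> gdom P"
    proof (cases "type0 g P")
      case True
      then have "p \<in> P (alpha1 g P)" using p b ne by (auto simp: Rpart_def lose_def)
      then show ?thesis using True piece_mem[of p P "alpha1 g P"] Rrem_T by auto
    next
      case False
      then have "p \<in> P (alpha1 g P) \<and> g p \<in> P (alpha0 P)" using p b ne by (auto simp: Rpart_def lose_def)
      then show ?thesis using False piece_mem[of p P "alpha1 g P"] Rrem_F by auto
    qed
  }
qed

lemma ret_formula:
  assumes p: "p \<in> gdom P - Rrem g P"
  shows "first_return (gdom P - Rrem g P) g p = (if g p \<notin> Rrem g P then g p else g (g p))"
proof -
  let ?S = "gdom P - Rrem g P"
  have gp: "g p \<in> gdom P" using g_in[OF G] p by blast
  show ?thesis
  proof (cases "g p \<in> Rrem g P")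
    case False
    then have "ret ?S g p = 1" unfolding ret_def
      by (intro Least_equality) (use gp in auto)
    then show ?thesis using False by (simp add: first_return_def)
  next
    case True
    have ggp: "g (g p) \<in> ?S" using R_step[OF True] .
    have "ret ?S g p = 2" unfolding ret_def
    proof (intro Least_equality)
      show "0 < (2::nat) \<and> (g ^^ 2) p \<in> ?S" using ggp by (simp add: numeral_2_eq_2)
      fix k :: nat assume k: "0 < k \<and> (g ^^ k) p \<in> ?S"
      show "2 \<le> k"
      proof (rule ccontr)
        assume "\<not> 2 \<le> k" then have "k = 1" using k by auto
        then show False using k True by simp
      qed
    qed
    then show ?thesis using True by (simp add: first_return_def numeral_2_eq_2)
  qed
qed

lemma C2:
  "\<exists>\<gamma>. first_return (gdom (Rpart g P)) g ` Rpart g P \<beta> \<subseteq> g ` P \<gamma>"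
proof -
  let ?g' = "first_return (gdom (Rpart g P)) g"
  have pin: "\<And>p. p \<in> Rpart g P \<beta> \<Longrightarrow> p \<in> gdom P - Rrem g P"
    using Rpart_dom piece_mem[of _ "Rpart g P" \<beta>] by simp
  show ?thesis
  proof (cases "\<beta> = lose g P")
    case False
    have "?g' ` Rpart g P \<beta> \<subseteq> g ` P \<beta>"
    proof
      fix z assume "z \<in> ?g' ` Rpart g P \<beta>"
      then obtain p where p: "p \<in> Rpart g P \<beta>" "z = ?g' p" by blast
      have D: "p \<in> P \<beta> \<and> g p \<notin> Rrem g P" using piece_D(1)[OF p(1) False] .
      have "z = g p" using p ret_formula[OF pin[OF p(1)]] D Rpart_dom by simp
      then show "z \<in> g ` P \<beta>" using D by simp
    qed
    then show ?thesis by blast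
  next
    case True
    have "?g' ` Rpart g P \<beta> \<subseteq> g ` P (alpha0 P)"
    proof
      fix z assume "z \<in> ?g' ` Rpart g P \<beta>"
      then obtain p where p: "p \<in> Rpart g P \<beta>" "z = ?g' p" by blast
      have D: "g p \<in> Rrem g P" using piece_D(2)[OF p(1) True] by simp
      have "z = g (g p)" using p ret_formula[OF pin[OF p(1)]] D Rpart_dom by simp
      then show "z \<in> g ` P (alpha0 P)" using D R_sub0 by blast
    qed
    then show ?thesis by blast
  qed
qed

lemma C3:
  assumes y: "y \<in> Rrem g P" and gy: "g y \<in> first_return (gdom (Rpart g P)) g ` Rpart g P \<beta>"
  shows "first_return (gdom (Rpart g P)) g ` Rpart g P \<beta> \<subseteq> g ` Rrem g P"
proof -
  let ?g' = "first_return (gdom (Rpart g P)) g"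
  have pin: "\<And>p. p \<in> Rpart g P \<beta> \<Longrightarrow> p \<in> gdom P - Rrem g P"
    using Rpart_dom piece_mem[of _ "Rpart g P" \<beta>] by simp
  have b: "\<beta> = lose g P"
  proof (rule ccontr)
    assume nb: "\<beta> \<noteq> lose g P"
    obtain p where p: "p \<in> Rpart g P \<beta>" "g y = ?g' p" using gy by blast
    have D: "p \<in> P \<beta> \<and> g p \<notin> Rrem g P" using piece_D(1)[OF p(1) nb] .
    have "g y = g p" using p ret_formula[OF pin[OF p(1)]] D Rpart_dom by simp
    then have "y = p" using g_inj[OF G] y R_dom pin[OF p(1)] by blast
    then show False using y pin[OF p(1)] by blast
  qed
  show ?thesis
  proof
    fix z assume "z \<in> ?g' ` Rpart g P \<beta>"
    then obtain p where p: "p \<in> Rpart g P \<beta>" "z = ?g' p" by blast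
    have D: "g p \<in> Rrem g P" using piece_D(2)[OF p(1) b] by simp
    have "z = g (g p)" using p ret_formula[OF pin[OF p(1)]] D Rpart_dom by simp
    then show "z \<in> g ` Rrem g P" using D by blast
  qed
qed

end



locale stg =
  fixes f :: "real \<Rightarrow> real" and P :: "'a::finite \<Rightarrow> real set"
  assumes IR: "inf_renorm f P" and D0: "gdom P = {0..<1}"
begin

abbreviation "gg j \<equiv> fn f P j"
abbreviation "PP j \<equiv> Pn f P j"
abbreviation "II j \<equiv> In f P j"
abbreviation "Rr j \<equiv> Rrem (gg j) (PP j)"

lemma Gj: "giem (gg j) (PP j)" using IR by (simp add: inf_renorm_def)
lemma RDj: "R_defined (gg j) (PP j)" using IR by (simp add: inf_renorm_def)

lemma pair_j: "(Rstep ^^ j) (f, P) = (gg j, PP j)"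
  by (simp add: fn_def Pn_def)

lemma PP_Suc: "PP (Suc j) = Rpart (gg j) (PP j)"
  unfolding Pn_def using pair_j[of j] by (simp add: Rstep_def Let_def)

lemma gg_Suc: "gg (Suc j) = first_return (gdom (PP (Suc j))) (gg j)"
  unfolding fn_def using pair_j[of j] PP_Suc[of j] by (simp add: Rstep_def Let_def)

lemma base: "gg 0 = f" "PP 0 = P" "II 0 = {0..<1}"
  by (simp_all add: fn_def Pn_def In_def D0)

lemma II_Suc: "II (Suc j) = II j - Rr j"
  unfolding In_def PP_Suc by (rule Rpart_dom[OF Gj RDj])

lemma Rr_sub: "Rr j \<subseteq> II j"
  unfolding In_def by (rule R_dom[OF Gj RDj])

lemma II_sub: "II (Suc j) \<subseteq> II j" using II_Suc by blast

lemma II_sub0: "II j \<subseteq> {0..<1}"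
  by (induction j) (use base II_sub in auto)

lemma gg_in: "y \<in> II j \<Longrightarrow> gg j y \<in> II j"
  unfolding In_def by (rule g_in[OF Gj])

lemma R_stepj: "y \<in> Rr j \<Longrightarrow> gg j y \<in> II (Suc j)"
  using R_step[OF Gj RDj, of y j] II_Suc[of j] unfolding In_def by simp

lemma gg_Suc_formula:
  assumes p: "p \<in> II (Suc j)"
  shows "gg (Suc j) p = (if gg j p \<notin> Rr j then gg j p else gg j (gg j p))"
proof -
  have e: "gdom (PP (Suc j)) = gdom (PP j) - Rr j" using II_Suc[of j] unfolding In_def .
  have p': "p \<in> gdom (PP j) - Rr j" using p e unfolding In_def by simp
  show ?thesis using ret_formula[OF Gj RDj p'] unfolding gg_Suc e by simp
qed

lemma FR: "y \<in> II j \<Longrightarrow> \<exists>r>0. gg j y = (f ^^ r) y \<and> (\<forall>i. 0 < i \<and> i < r \<longrightarrow> (f ^^ i) y \<notin> II j)"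
proof (induction j arbitrary: y)
  case 0
  then show ?case by (intro exI[of _ 1]) (auto simp: base)
next
  case (Suc j)
  have yj: "y \<in> II j" using Suc.prems II_sub by blast
  obtain r1 where r1: "r1 > 0" "gg j y = (f ^^ r1) y" "\<forall>i. 0 < i \<and> i < r1 \<longrightarrow> (f ^^ i) y \<notin> II j"
    using Suc.IH[OF yj] by blast
  show ?case
  proof (cases "gg j y \<notin> Rr j")
    case True
    then have "gg (Suc j) y = gg j y" using gg_Suc_formula[OF Suc.prems] by simp
    show ?thesis
    proof (intro exI[of _ r1] conjI allI impI)
      show "0 < r1" by (rule r1(1))
      show "gg (Suc j) y = (f ^^ r1) y" using \<open>gg (Suc j) y = gg j y\<close> r1(2) by simp
      fix i assume "0 < i \<and> i < r1"
      then have "(f ^^ i) y \<notin> II j" using r1(3) by blast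
      then show "(f ^^ i) y \<notin> II (Suc j)" using II_sub[of j] by blast
    qed
  next
    case False
    then have e: "gg (Suc j) y = gg j (gg j y)" using gg_Suc_formula[OF Suc.prems] by simp
    define y1 where "y1 = gg j y"
    have y1j: "y1 \<in> II j" unfolding y1_def by (rule gg_in[OF yj])
    obtain r2 where r2: "r2 > 0" "gg j y1 = (f ^^ r2) y1" "\<forall>i. 0 < i \<and> i < r2 \<longrightarrow> (f ^^ i) y1 \<notin> II j"
      using Suc.IH[OF y1j] by blast
    have y1S: "y1 \<notin> II (Suc j)" using False II_Suc unfolding y1_def by blast
    show ?thesis
    proof (intro exI[of _ "r2 + r1"] conjI allI impI)
      show "0 < r2 + r1" using r1 by simp
      show "gg (Suc j) y = (f ^^ (r2 + r1)) y" using e r1(2) r2(2) unfolding y1_def by (simp add: funpow_add)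
      fix i assume i: "0 < i \<and> i < r2 + r1"
      show "(f ^^ i) y \<notin> II (Suc j)"
      proof (cases "i < r1")
        case True
        then have "(f ^^ i) y \<notin> II j" using r1(3) i by blast
        then show ?thesis using II_sub[of j] by blast
      next
        case nl: False
        show ?thesis
        proof (cases "i = r1")
          case True then show ?thesis using y1S r1(2) unfolding y1_def by simp
        next
          case False
          then have i2: "0 < i - r1" "i - r1 < r2" using nl i by auto
          have ii: "i = (i - r1) + r1" using nl by simp
          have "(f ^^ i) y = (f ^^ ((i - r1) + r1)) y" using ii by simp
          also have "\<dots> = (f ^^ (i - r1)) ((f ^^ r1) y)" by (simp only: funpow_add o_apply)
          finally have "(f ^^ i) y = (f ^^ (i - r1)) y1" using r1(2) unfolding y1_def by simp
          moreover have "(f ^^ (i - r1)) y1 \<notin> II j" using r2(3) i2 by blast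
          ultimately show ?thesis using II_sub[of j] by auto
        qed
      qed
    qed
  qed
qed

definition KK :: "nat \<Rightarrow> real \<Rightarrow> nat" where
  "KK j x = (LEAST k. (f ^^ k) x \<in> II j)"

definition Y :: "nat \<Rightarrow> real \<Rightarrow> real" where
  "Y j x = (f ^^ KK j x) x"

lemma ENT: "x \<in> {0..<1} \<Longrightarrow> \<exists>k. (f ^^ k) x \<in> II j"
proof (induction j)
  case 0 then show ?case using base by (intro exI[of _ 0]) simp
next
  case (Suc j)
  then obtain k0 where "(f ^^ k0) x \<in> II j" by blast
  then have Yin: "Y j x \<in> II j" unfolding Y_def KK_def by (rule LeastI)
  show ?case
  proof (cases "Y j x \<in> II (Suc j)")
    case True then show ?thesis unfolding Y_def by blast
  next
    case False
    then have R: "Y j x \<in> Rr j" using Yin II_Suc by blast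
    obtain r where r: "gg j (Y j x) = (f ^^ r) (Y j x)" using FR[OF Yin] by blast
    have "(f ^^ (r + KK j x)) x \<in> II (Suc j)"
      using R_stepj[OF R] r unfolding Y_def by (simp add: funpow_add)
    then show ?thesis by blast
  qed
qed

lemma Y_in: "x \<in> {0..<1} \<Longrightarrow> Y j x \<in> II j"
  using ENT[of x j] unfolding Y_def KK_def by (metis LeastI)

lemma KK_before: "x \<in> {0..<1} \<Longrightarrow> k < KK j x \<Longrightarrow> (f ^^ k) x \<notin> II j"
  unfolding KK_def by (rule not_less_Least)

lemma Y0: "x \<in> {0..<1} \<Longrightarrow> Y 0 x = x"
proof -
  assume x: "x \<in> {0..<1}"
  have "KK 0 x = 0" unfolding KK_def using x base by (intro Least_equality) auto
  then show ?thesis by (simp add: Y_def)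
qed

lemma Y_Suc: 
  assumes x: "x \<in> {0..<1}"
  shows "Y (Suc j) x = (if Y j x \<in> II (Suc j) then Y j x else gg j (Y j x))"
proof -
  define K where "K = KK j x"
  have Yin: "Y j x \<in> II j" using Y_in[OF x] .
  show ?thesis
  proof (cases "Y j x \<in> II (Suc j)")
    case True
    have "KK (Suc j) x = K" unfolding KK_def
    proof (rule Least_equality)
      show "(f ^^ K) x \<in> II (Suc j)" using True unfolding Y_def K_def .
      fix k assume "(f ^^ k) x \<in> II (Suc j)"
      then have "(f ^^ k) x \<in> II j" using II_sub by blast
      then show "K \<le> k" unfolding K_def KK_def by (rule Least_le)
    qed
    then show ?thesis using True unfolding Y_def K_def by simp
  next
    case False
    then have R: "Y j x \<in> Rr j" using Yin II_Suc by blast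
    obtain r where r: "r > 0" "gg j (Y j x) = (f ^^ r) (Y j x)" "\<forall>i. 0 < i \<and> i < r \<longrightarrow> (f ^^ i) (Y j x) \<notin> II j"
      using FR[OF Yin] by blast
    have "KK (Suc j) x = r + K" unfolding KK_def
    proof (rule Least_equality)
      show "(f ^^ (r + K)) x \<in> II (Suc j)"
        using R_stepj[OF R] r(2) unfolding Y_def K_def by (simp add: funpow_add)
      fix k assume k: "(f ^^ k) x \<in> II (Suc j)"
      show "r + K \<le> k"
      proof (rule ccontr)
        assume "\<not> r + K \<le> k"
        then have lt: "k < r + K" by simp
        have kj: "(f ^^ k) x \<in> II j" using k II_sub by blast
        consider "k < K" | "k = K" | "K < k" by linarith
        then show False
        proof cases
          case 1 then show False using KK_before[OF x, of k j] kj unfolding K_def by simp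
        next
          case 2 then show False using k False unfolding Y_def K_def by simp
        next
          case 3
          have kk: "k = (k - K) + K" using 3 by simp
          have "(f ^^ k) x = (f ^^ ((k - K) + K)) x" using kk by simp
          also have "\<dots> = (f ^^ (k - K)) ((f ^^ K) x)" by (simp only: funpow_add o_apply)
          finally have "(f ^^ k) x = (f ^^ (k - K)) (Y j x)" unfolding Y_def K_def .
          moreover have "0 < k - K" "k - K < r" using 3 lt by auto
          ultimately show False using r(3) kj by auto
        qed
      qed
    qed
    then show ?thesis using False r(2) unfolding Y_def K_def by (simp add: funpow_add)
  qed
qed

end



context stg
begin

lemma G0: "giem f P" using Gj[of 0] base by simp

lemma sc_Suc: "scode f P (Suc j) x = (if Y j x \<in> II (Suc j)
   then (THE \<beta>. Y j x \<in> gg (Suc j) ` PP (Suc j) \<beta>, 0, Suc j)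
   else (THE \<beta>. gg j (Y j x) \<in> gg (Suc j) ` PP (Suc j) \<beta>, 1, Suc j))"
  by (simp add: Let_def Y_def KK_def)

lemma cell_in: "gg j ` PP j \<beta> \<subseteq> II j"
  unfolding In_def by (rule cell_sub[OF Gj])

lemma cell_C2: "\<exists>\<gamma>. gg (Suc j) ` PP (Suc j) \<beta> \<subseteq> gg j ` PP j \<gamma>"
  using C2[OF Gj RDj, of j \<beta>] unfolding gg_Suc PP_Suc .

lemma cell_C3: "y \<in> Rr j \<Longrightarrow> gg j y \<in> gg (Suc j) ` PP (Suc j) \<beta> \<Longrightarrow> gg (Suc j) ` PP (Suc j) \<beta> \<subseteq> gg j ` Rr j"
  using C3[OF Gj RDj, of y j \<beta>] unfolding gg_Suc PP_Suc by blast

lemma R_cell: "Rr j \<subseteq> gg j ` PP j (alpha1 (gg j) (PP j))"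
  by (rule R_sub1[OF Gj RDj])

lemma L: "x \<in> {0..<1} \<Longrightarrow> Y n x \<in> gg n ` PP n (fst (scode f P n x))"
proof (cases n)
  case 0
  assume x: "x \<in> {0..<1}"
  obtain \<beta> where b: "x \<in> f ` P \<beta>" using cells_cover[OF G0] x D0 by blast
  have "fst (scode f P 0 x) = \<beta>" using the_cell[OF G0 b] by simp
  then show ?thesis using b 0 Y0[OF x] base by simp
next
  case (Suc j)
  assume x: "x \<in> {0..<1}"
  have Yin: "Y j x \<in> II j" using Y_in[OF x] .
  show ?thesis
  proof (cases "Y j x \<in> II (Suc j)")
    case True
    obtain \<beta> where b: "Y j x \<in> gg (Suc j) ` PP (Suc j) \<beta>"
      using cells_cover[OF Gj] True unfolding In_def by blast
    have "fst (scode f P (Suc j) x) = \<beta>" using the_cell[OF Gj b] True sc_Suc by simp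
    then show ?thesis using b Suc Y_Suc[OF x, of j] True by simp
  next
    case False
    then have R: "Y j x \<in> Rr j" using Yin II_Suc by blast
    have inS: "gg j (Y j x) \<in> II (Suc j)" by (rule R_stepj[OF R])
    obtain \<beta> where b: "gg j (Y j x) \<in> gg (Suc j) ` PP (Suc j) \<beta>"
      using cells_cover[OF Gj] inS unfolding In_def by blast
    have "fst (scode f P (Suc j) x) = \<beta>" using the_cell[OF Gj b] False sc_Suc by simp
    then show ?thesis using b Suc Y_Suc[OF x, of j] False by simp
  qed
qed

lemma Q: "x \<in> {0..<1} \<Longrightarrow> Y n x \<in> gg n ` PP n \<beta> \<Longrightarrow> z \<in> gg n ` PP n \<beta> \<Longrightarrow>
   \<exists>u\<in>{0..<1}. (\<forall>i\<le>n. scode f P i u = scode f P i x) \<and> Y n u = z"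
proof (induction n arbitrary: x \<beta> z)
  case 0
  have zb: "z \<in> f ` P \<beta>" and xb: "x \<in> f ` P \<beta>" using 0 Y0 base by auto
  have z01: "z \<in> {0..<1}" using cell_sub[OF G0, of \<beta>] zb D0 by blast
  have "scode f P 0 z = scode f P 0 x" using the_cell[OF G0 zb] the_cell[OF G0 xb] by simp
  then show ?case using z01 Y0[OF z01] by (intro bexI[of _ z]) auto
next
  case (Suc j)
  have x: "x \<in> {0..<1}" using Suc.prems(1) .
  have Yin: "Y j x \<in> II j" using Y_in[OF x] .
  show ?case
  proof (cases "Y j x \<in> II (Suc j)")
    case True
    have YS: "Y (Suc j) x = Y j x" using Y_Suc[OF x, of j] True by simp
    obtain \<gamma> where g: "gg (Suc j) ` PP (Suc j) \<beta> \<subseteq> gg j ` PP j \<gamma>" using cell_C2 by blast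
    have zS: "z \<in> II (Suc j)" using Suc.prems(3) cell_in by blast
    have c1: "Y j x \<in> gg j ` PP j \<gamma>" using Suc.prems(2) YS g by auto
    have c2: "z \<in> gg j ` PP j \<gamma>" using Suc.prems(3) g by auto
    obtain u where u: "u \<in> {0..<1}" "\<forall>i\<le>j. scode f P i u = scode f P i x" "Y j u = z"
      using Suc.IH[OF x c1 c2] by blast
    have YSu: "Y (Suc j) u = z" using Y_Suc[OF u(1), of j] u(3) zS by simp
    have "scode f P (Suc j) u = (\<beta>, 0, Suc j)"
      using sc_Suc[of j u] u(3) zS the_cell[OF Gj Suc.prems(3)] by simp
    moreover have "scode f P (Suc j) x = (\<beta>, 0, Suc j)"
      using sc_Suc[of j x] True the_cell[OF Gj, of "Y j x" "Suc j" \<beta>] Suc.prems(2) YS by simp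
    ultimately have "\<forall>i\<le>Suc j. scode f P i u = scode f P i x" using u(2) le_Suc_eq by auto
    then show ?thesis using u(1) YSu by blast
  next
    case False
    then have R: "Y j x \<in> Rr j" using Yin II_Suc by blast
    have YS: "Y (Suc j) x = gg j (Y j x)" using Y_Suc[OF x, of j] False by simp
    have sub: "gg (Suc j) ` PP (Suc j) \<beta> \<subseteq> gg j ` Rr j"
      using cell_C3[OF R] Suc.prems(2) YS by simp
    obtain z' where z': "z' \<in> Rr j" "z = gg j z'" using sub Suc.prems(3) by blast
    let ?\<gamma> = "alpha1 (gg j) (PP j)"
    obtain u where u: "u \<in> {0..<1}" "\<forall>i\<le>j. scode f P i u = scode f P i x" "Y j u = z'"
      using Suc.IH[OF x, of ?\<gamma> z'] R z' R_cell[of j] by blast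
    have z'S: "z' \<notin> II (Suc j)" using z'(1) II_Suc by blast
    have YSu: "Y (Suc j) u = z" using Y_Suc[OF u(1), of j] u(3) z'S z'(2) by simp
    have "scode f P (Suc j) u = (\<beta>, 1, Suc j)"
      using sc_Suc[of j u] u(3) z'S z'(2) the_cell[OF Gj Suc.prems(3)] by simp
    moreover have "scode f P (Suc j) x = (\<beta>, 1, Suc j)"
      using sc_Suc[of j x] False the_cell[OF Gj, of "gg j (Y j x)" "Suc j" \<beta>] Suc.prems(2) YS by simp
    ultimately have "\<forall>i\<le>Suc j. scode f P i u = scode f P i x" using u(2) le_Suc_eq by auto
    then show ?thesis using u(1) YSu by blast
  qed
qed

lemma M: "x \<in> {0..<1} \<Longrightarrow> u \<in> {0..<1} \<Longrightarrow> Y n u = Y n x \<Longrightarrow> n \<le> i \<Longrightarrow> Y i u = Y i x"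
proof (induction i)
  case 0 then show ?case by simp
next
  case (Suc i)
  show ?case
  proof (cases "n = Suc i")
    case True then show ?thesis using Suc.prems by simp
  next
    case False
    then have "Y i u = Y i x" using Suc by simp
    then show ?thesis using Y_Suc[OF Suc.prems(1), of i] Y_Suc[OF Suc.prems(2), of i] by simp
  qed
qed

lemma M2: "x \<in> {0..<1} \<Longrightarrow> u \<in> {0..<1} \<Longrightarrow> Y n u = Y n x \<Longrightarrow> n < i \<Longrightarrow> scode f P i u = scode f P i x"
proof -
  assume a: "x \<in> {0..<1}" "u \<in> {0..<1}" "Y n u = Y n x" "n < i"
  then obtain j where j: "i = Suc j" "n \<le> j" by (cases i) auto
  have "Y j u = Y j x" using M[OF a(1,2,3) j(2)] .
  then show ?thesis using j(1) sc_Suc by simp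
qed

lemma E_countable: "countable (\<Union>n. \<Union>J\<in>tildeP f P n. {Inf J})"
proof -
  have cn: "countable (\<Union>J\<in>tildeP f P n. {Inf J})" for n
  proof -
    have sub: "tildeP f P n \<subseteq> (\<Union>\<alpha>. range (\<lambda>i. (f ^^ i) ` Pn f P n \<alpha>))"
      unfolding tildeP_def by blast
    have "countable (\<Union>\<alpha>::'a. range (\<lambda>i. (f ^^ i) ` Pn f P n \<alpha>))"
      by (rule countable_UN) (auto intro: countable_finite)
    then have "countable (tildeP f P n)" using sub countable_subset by blast
    then show ?thesis by (intro countable_UN) auto
  qed
  show ?thesis by (rule countable_UN[OF _ cn]) simp
qed

lemma final:
  assumes x: "x \<in> {0..<1}" and x': "x' \<in> {0..<1}"
    and e: "fst (scode f P n x) = fst (scode f P n x')"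
  shows "\<exists>u\<in>Lambda f P. (\<forall>i\<le>n. scode f P i u = scode f P i x) \<and>
            (\<forall>i. n < i \<and> i \<le> n + m \<longrightarrow> scode f P i u = scode f P i x')"
proof -
  define N where "N = n + m"
  define T where "T = {u\<in>{0..<1}. (\<forall>i\<le>n. scode f P i u = scode f P i x) \<and>
            (\<forall>i. n < i \<and> i \<le> N \<longrightarrow> scode f P i u = scode f P i x')}"
  define b2 where "b2 = fst (scode f P N x')"
  define S where "S = gg N ` PP N b2"
  have unc: "uncountable S" unfolding S_def by (rule cell_uncountable[OF Gj])
  have "S \<subseteq> Y N ` T"
  proof
    fix w assume w: "w \<in> S"
    obtain xw where xw: "xw \<in> {0..<1}" "\<forall>i\<le>N. scode f P i xw = scode f P i x'" "Y N xw = w"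
      using Q[OF x' L[OF x', of N] w[unfolded S_def b2_def]] by blast
    have bn: "fst (scode f P n xw) = fst (scode f P n x)" using xw(2) e unfolding N_def by simp
    have c1: "Y n xw \<in> gg n ` PP n (fst (scode f P n x))" using L[OF xw(1), of n] bn by simp
    obtain u where u: "u \<in> {0..<1}" "\<forall>i\<le>n. scode f P i u = scode f P i x" "Y n u = Y n xw"
      using Q[OF x L[OF x, of n] c1] by blast
    have "\<forall>i. n < i \<and> i \<le> N \<longrightarrow> scode f P i u = scode f P i x'"
      using M2[OF xw(1) u(1) u(3)] xw(2) by simp
    then have "u \<in> T" unfolding T_def using u by simp
    moreover have "Y N u = w" using M[OF xw(1) u(1) u(3), of N] xw(3) unfolding N_def by simp
    ultimately show "w \<in> Y N ` T" by blast
  qed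
  then have "uncountable T" using unc countable_image countable_subset by metis
  then have "\<not> T \<subseteq> (\<Union>n. \<Union>J\<in>tildeP f P n. {Inf J})" using E_countable countable_subset by blast
  then obtain u where "u \<in> T" "u \<notin> (\<Union>n. \<Union>J\<in>tildeP f P n. {Inf J})" by blast
  then have "u \<in> Lambda f P" "u \<in> T" unfolding Lambda_def T_def by auto
  then show ?thesis unfolding T_def N_def by blast
qed

end



theorem lemma4p4:
  fixes f :: "real \<Rightarrow> real" and P :: "'a::finite \<Rightarrow> real set"
    and k :: nat and \<nu> :: real and k' n m :: nat
    and a a' :: "nat \<Rightarrow> 'a letter"
  assumes "0 < \<nu>"
    and "in_B k \<nu> f P"
    and "gdom P = {0..<1}"
    and "k' \<le> n"
    and "\<forall>i\<in>{k'..n}. lidx (a i) = i"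
    and "\<forall>i\<in>{n..n+m}. lidx (a' i) = i"
    and "admissible f P (a ` {k'..n})"
    and "admissible f P (a' ` {n..n+m})"
    and "lsym (a n) = lsym (a' n)"
  shows "admissible f P (a ` {k'..n} \<union> a' ` {n+1..n+m})"
proof -
  have IR: "inf_renorm f P" using assms(2) by (simp add: in_B_def bounded_comb_def)
  interpret stg f P using IR assms(3) by unfold_locales
  have "cylinder f P (a ` {k'..n}) \<noteq> {}" using assms(7) by (simp add: admissible_def)
  then obtain x where x: "x \<in> Lambda f P" "\<forall>l\<in>a ` {k'..n}. scode f P (lidx l) x = l"
    unfolding cylinder_def by fastforce
  have xa: "scode f P i x = a i" if "i \<in> {k'..n}" for i
    using x(2) that assms(5) by fastforce
  have "cylinder f P (a' ` {n..n+m}) \<noteq> {}" using assms(8) by (simp add: admissible_def)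
  then obtain x' where x': "x' \<in> Lambda f P" "\<forall>l\<in>a' ` {n..n+m}. scode f P (lidx l) x' = l"
    unfolding cylinder_def by fastforce
  have xa': "scode f P i x' = a' i" if "i \<in> {n..n+m}" for i
    using x'(2) that assms(6) by fastforce
  have x01: "x \<in> {0..<1}" "x' \<in> {0..<1}" using x(1) x'(1) unfolding Lambda_def by auto
  have e: "fst (scode f P n x) = fst (scode f P n x')"
    using xa[of n] xa'[of n] assms(4,9) by (simp add: lsym_def)
  obtain u where u: "u \<in> Lambda f P" "\<forall>i\<le>n. scode f P i u = scode f P i x"
     "\<forall>i. n < i \<and> i \<le> n + m \<longrightarrow> scode f P i u = scode f P i x'"
    using final[OF x01 e, of m] by blast
  let ?W = "a ` {k'..n} \<union> a' ` {n+1..n+m}"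
  have "u \<in> {x \<in> Lambda f P. \<forall>l\<in>?W. scode f P (lidx l) x = l}"
  proof (intro CollectI conjI ballI)
    show "u \<in> Lambda f P" by (rule u(1))
    fix l assume "l \<in> ?W"
    then consider i where "i \<in> {k'..n}" "l = a i" | i where "i \<in> {n+1..n+m}" "l = a' i" by blast
    then show "scode f P (lidx l) u = l"
    proof cases
      case 1 then show ?thesis using u(2) xa assms(5) by auto
    next
      case 2 then show ?thesis using u(3) xa' assms(6) by auto
    qed
  qed
  then have cyl: "cylinder f P ?W \<noteq> {}" unfolding cylinder_def using closure_subset by blast
  have inj: "inj_on lidx ?W"
  proof (rule inj_onI)
    fix l1 l2 assume l1: "l1 \<in> ?W" and l2: "l2 \<in> ?W" and e: "lidx l1 = lidx l2"
    have h1: "\<exists>i. lidx l1 = i \<and> (i \<in> {k'..n} \<and> l1 = a i \<or> i \<in> {n+1..n+m} \<and> l1 = a' i)"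
      using l1 assms(5,6) by auto
    have h2: "\<exists>i. lidx l2 = i \<and> (i \<in> {k'..n} \<and> l2 = a i \<or> i \<in> {n+1..n+m} \<and> l2 = a' i)"
      using l2 assms(5,6) by auto
    show "l1 = l2" using h1 h2 e by auto
  qed
  show ?thesis unfolding admissible_def is_word_def using cyl inj by simp
qed


end
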